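(* Assume the standing hypotheses described in the context. Take $0\le\theta\le\Theta$ and $N_\theta\in\mathcal N_\theta$. Then for any $(t,\varepsilon)\in\Omega$ and $x\in K(t,\varepsilon)$, \[N_\theta(K(t,\varepsilon))\subset K(n_\theta(t,\varepsilon))\subset K,\qquad \|N_\theta(x)-x\|\le t_+-t,\] where $t_+$ is the first component of $n_\theta(t,\varepsilon)$. Moreover, $n_\theta(\Omega)\subset\Omega$ and $N_\theta(K)\subset K$.
   Context: Standing hypotheses: $\mathbb X,\mathbb Y$ are Banach spaces; $B(x,r)$ is the open ball. $R\in\mathbb R$, $C\subseteq\mathbb X$, $F:C\to\mathbb Y$ is continuous and continuously differentiable on $\mathrm{int}(C)$, $x_0\in\mathrm{int}(C)$ with $F'(x_0)$ non-singular, $f:[0,R)\to\mathbb R$ is continuously differentiable, $B(x_0,R)\subseteq C$, $\|F'(x_0)^{-1}[F'(y)-F'(x)]\|\le f'(\|y-x\|+\|x-x_0\|)-f'(\|x-x_0\|)$ for all $x,y\in B(x_0,R)$ with $\|x-x_0\|+\|y-x\|<R$, $\|F'(x_0)^{-1}F(x_0)\|\le f(0)$, and (h1) $f(0)>0$, $f'(0)=-1$; (h2) $f'$ is strictly increasing and convex; (h3) $f(t)<0$ for some $t\in(0,R)$. Notation: $\bar t:=\sup\{t\in[0,R):f'(t)<0\}$, $\kappa:=\sup_{0<t<R}\frac{-f(t)}{t}$, $\lambda:=\sup\{t\in[0,R):\kappa+f'(t)<0\}$, $\Theta:=\kappa/(2-\kappa)$. For $\theta\ge0$, $n_\theta:[0,\bar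 t)\times[0,\infty)\to\mathbb R^2$, $n_\theta(t,\varepsilon):=\big(t-(1+\theta)\frac{f(t)+\varepsilon}{f'(t)},\ \varepsilon+2\theta(f(t)+\varepsilon)\big)$. $\Omega:=\{(t,\varepsilon)\in\mathbb R^2:0\le t<\lambda,\ 0\le\varepsilon\le\kappa t,\ 0<f(t)+\varepsilon\}$. $K(t,\varepsilon):=\{x:\|x-x_0\|\le t,\ \|F'(x_0)^{-1}F(x)\|\le f(t)+\varepsilon\}$ and $K:=\bigcup_{(t,\varepsilon)\in\Omega}K(t,\varepsilon)$. $\mathcal N_\theta$ is the family of maps $N:B(x_0,\bar t)\to\mathbb X$ such that $\|F'(x_0)^{-1}[F(x)+F'(x)(N(x)-x)]\|\le\theta\|F'(x_0)^{-1}F(x)\|$ for each $x\in B(x_0,\bar t)$. *)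

theory Defs
  imports "HOL-Analysis.Analysis"
begin

definition tbar :: "(real \<Rightarrow> real) \<Rightarrow> real \<Rightarrow> real" where
  "tbar f' R = Sup {t \<in> {0..<R}. f' t < 0}"

definition kappa :: "(real \<Rightarrow> real) \<Rightarrow> real \<Rightarrow> real" where
  "kappa f R = Sup ((\<lambda>t. - f t / t) ` {0<..<R})"

definition lam :: "(real \<Rightarrow> real) \<Rightarrow> (real \<Rightarrow> real) \<Rightarrow> real \<Rightarrow> real" where
  "lam f f' R = Sup {t \<in> {0..<R}. kappa f R + f' t < 0}"

definition Theta :: "(real \<Rightarrow> real) \<Rightarrow> real \<Rightarrow> real" where
  "Theta f R = kappa f R / (2 - kappa f R)"

definition n_theta :: "(real \<Rightarrow> real) \<Rightarrow> (real \<Rightarrow> real) \<Rightarrow> real \<Rightarrow> real \<times> real \<Rightarrow> real \<times> real" where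
  "n_theta f f' \<theta> p = (case p of (t, \<epsilon>) \<Rightarrow>
      (t - (1 + \<theta>) * (f t + \<epsilon>) / f' t, \<epsilon> + 2 * \<theta> * (f t + \<epsilon>)))"

definition Omega :: "(real \<Rightarrow> real) \<Rightarrow> (real \<Rightarrow> real) \<Rightarrow> real \<Rightarrow> (real \<times> real) set" where
  "Omega f f' R = {(t, \<epsilon>). 0 \<le> t \<and> t < lam f f' R \<and> 0 \<le> \<epsilon> \<and> \<epsilon> \<le> kappa f R * t \<and> 0 < f t + \<epsilon>}"

text \<open>K(t,eps); Finv stands for the inverse of F'(x0).\<close>

definition Kset :: "('b::real_normed_vector \<Rightarrow>\<^sub>L 'a::real_normed_vector) \<Rightarrow> ('a \<Rightarrow> 'b) \<Rightarrow> 'a \<Rightarrow> (real \<Rightarrow> real) \<Rightarrow> real \<times> real \<Rightarrow> 'a set" where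
  "Kset Finv F x0 f p = (case p of (t, \<epsilon>) \<Rightarrow>
      {x. norm (x - x0) \<le> t \<and> norm (blinfun_apply Finv (F x)) \<le> f t + \<epsilon>})"

definition Kall :: "('b::real_normed_vector \<Rightarrow>\<^sub>L 'a::real_normed_vector) \<Rightarrow> ('a \<Rightarrow> 'b) \<Rightarrow> 'a \<Rightarrow> (real \<Rightarrow> real) \<Rightarrow> (real \<Rightarrow> real) \<Rightarrow> real \<Rightarrow> 'a set" where
  "Kall Finv F x0 f f' R = (\<Union>p \<in> Omega f f' R. Kset Finv F x0 f p)"

definition Nfamily :: "('b::real_normed_vector \<Rightarrow>\<^sub>L 'a::real_normed_vector) \<Rightarrow> ('a \<Rightarrow> 'b) \<Rightarrow> ('a \<Rightarrow> ('a \<Rightarrow>\<^sub>L 'b)) \<Rightarrow> 'a \<Rightarrow> real \<Rightarrow> real \<Rightarrow> ('a \<Rightarrow> 'a) set" where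
  "Nfamily Finv F F' x0 tb \<theta> = {N. \<forall>x \<in> ball x0 tb.
      norm (blinfun_apply Finv (F x + blinfun_apply (F' x) (N x - x))) \<le> \<theta> * norm (blinfun_apply Finv (F x))}"

end

theory Submission
  imports Defs
begin



lemma tangent_strict:
  fixes f f' :: "real \<Rightarrow> real"
  assumes fd: "\<forall>t \<in> {0..<R}. (f has_real_derivative f' t) (at t within {0..<R})"
    and sm: "strict_mono_on {0..<R} f'"
    and r: "r \<in> {0..<R}" and s: "s \<in> {0..<R}" and ne: "r \<noteq> s"
  shows "f s + f' s * (r - s) < f r"
proof -
  have der: "(f has_derivative (\<lambda>h. f' x * h)) (at x within {a..b})"
    if "a \<in> {0..<R}" "b \<in> {0..<R}" "a \<le> x" "x \<le> b" for a b x
  proof -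
    have "x \<in> {0..<R}" "{a..b} \<subseteq> {0..<R}" using that by auto
    then have "(f has_real_derivative f' x) (at x within {a..b})"
      using fd has_field_derivative_subset by blast
    then show ?thesis by (simp add: has_field_derivative_def mult_commute_abs)
  qed
  show ?thesis
  proof (cases "s < r")
    case True
    obtain x where x: "x \<in> {s<..<r}" "f r - f s = f' x * (r - s)"
      using mvt_simple[OF True, of f "\<lambda>x h. f' x * h"] der[OF s r] by blast
    have "f' s < f' x" using x r s by (intro strict_mono_onD[OF sm]) auto
    then have "f' s * (r - s) < f' x * (r - s)" using True by (simp add: mult_strict_right_mono)
    then show ?thesis using x by linarith
  next
    case False
    then have lt: "r < s" using ne by auto
    obtain x where x: "x \<in> {r<..<s}" "f s - f r = f' x * (s - r)"
      using mvt_simple[OF lt, of f "\<lambda>x h. f' x * h"] der[OF r s] by blast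
    have "f' x < f' s" using x r s by (intro strict_mono_onD[OF sm]) auto
    then have "f' x * (s - r) < f' s * (s - r)" using lt by (simp add: mult_strict_right_mono)
    moreover have "f' s * (r - s) = - (f' s * (s - r))" by (simp add: algebra_simps)
    ultimately show ?thesis using x by linarith
  qed
qed

lemma tangent:
  fixes f f' :: "real \<Rightarrow> real"
  assumes fd: "\<forall>t \<in> {0..<R}. (f has_real_derivative f' t) (at t within {0..<R})"
    and sm: "strict_mono_on {0..<R} f'"
    and r: "r \<in> {0..<R}" and s: "s \<in> {0..<R}"
  shows "f s + f' s * (r - s) \<le> f r"
  using tangent_strict[OF fd sm r s] by (cases "r = s") auto

lemma convex_incr:
  fixes g :: "real \<Rightarrow> real"
  assumes cv: "convex_on {0..<R} g" and ab: "a \<le> b" and h: "0 \<le> h"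
    and a: "0 \<le> a" and bh: "b + h < R"
  shows "g (a + h) - g a \<le> g (b + h) - g b"
proof (cases "b + h - a = 0")
  case True then show ?thesis using ab h by auto
next
  case False
  then have pos: "b + h - a > 0" using ab h by auto
  define \<mu> where "\<mu> = h / (b + h - a)"
  have m0: "0 \<le> \<mu>" "\<mu> \<le> 1" using pos ab h by (auto simp: \<mu>_def divide_simps)
  have A: "a \<in> {0..<R}" "b + h \<in> {0..<R}" using a ab h bh by auto
  have mh: "\<mu> * (b + h - a) = h" using pos by (simp add: \<mu>_def)
  have "(1 - \<mu>) * a + \<mu> * (b + h) = a + \<mu> * (b + h - a)" by (simp add: algebra_simps)
  then have e1: "(1 - \<mu>) *\<^sub>R a + \<mu> *\<^sub>R (b + h) = a + h" using mh by simp
  have "(1 - (1 - \<mu>)) * a + (1 - \<mu>) * (b + h) = (b + h) - \<mu> * (b + h - a)" by (simp add: algebra_simps)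
  then have e2: "(1 - (1 - \<mu>)) *\<^sub>R a + (1 - \<mu>) *\<^sub>R (b + h) = b" using mh by simp
  have "g (a + h) \<le> (1 - \<mu>) * g a + \<mu> * g (b + h)"
    using convex_onD[OF cv m0 A] e1 by simp
  moreover have "g b \<le> (1 - (1 - \<mu>)) * g a + (1 - \<mu>) * g (b + h)"
    using convex_onD[OF cv _ _ A, of "1 - \<mu>"] e2 m0 by simp
  ultimately show ?thesis by (simp add: algebra_simps)
qed

lemma kappa_facts:
  fixes f f' :: "real \<Rightarrow> real"
  assumes fd: "\<forall>t \<in> {0..<R}. (f has_real_derivative f' t) (at t within {0..<R})"
    and sm: "strict_mono_on {0..<R} f'"
    and h1: "f 0 > 0" "f' 0 = -1"
    and h3: "\<exists>t \<in> {0<..<R}. f t < 0"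
  shows "0 < kappa f R" "kappa f R < 1" "\<forall>s\<in>{0<..<R}. - f s / s \<le> kappa f R"
    "\<forall>c>0. \<exists>r\<in>{0<..<R}. f r + kappa f R * r < c"
proof -
  obtain t0 where t0: "t0 \<in> {0<..<R}" "f t0 < 0" using h3 by auto
  have R: "R > 0" using t0 by auto
  have bnd: "- f s / s \<le> 1 - f 0 / R" if "s \<in> {0<..<R}" for s
  proof -
    have "f 0 + f' 0 * (s - 0) \<le> f s" using tangent[OF fd sm, of s 0] that R by auto
    then have "- f s \<le> s - f 0" using h1 by simp
    then have "- f s / s \<le> (s - f 0) / s" using that divide_right_mono[of "- f s" "s - f 0" s] by simp
    also have "\<dots> = 1 - f 0 / s" using that by (simp add: field_simps)
    also have "\<dots> \<le> 1 - f 0 / R" using that h1 by (simp add: frac_le)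
    finally show ?thesis .
  qed
  let ?S = "(\<lambda>t. - f t / t) ` {0<..<R}"
  have ne: "?S \<noteq> {}" using t0 by auto
  have bdd: "bdd_above ?S" by (rule bdd_aboveI[where M="1 - f 0 / R"]) (use bnd in auto)
  show up: "\<forall>s\<in>{0<..<R}. - f s / s \<le> kappa f R"
    unfolding kappa_def using bdd by (auto intro: cSup_upper)
  have "kappa f R \<le> 1 - f 0 / R" unfolding kappa_def
    using ne bnd by (auto intro!: cSup_least)
  moreover have "f 0 / R > 0" using h1 R by simp
  ultimately show "kappa f R < 1" by linarith
  have "0 < - f t0 / t0" using divide_pos_pos[of "- f t0" t0] t0 by simp
  then show "0 < kappa f R" using up t0 by force
  show "\<forall>c>0. \<exists>r\<in>{0<..<R}. f r + kappa f R * r < c"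
  proof (intro allI impI)
    fix c :: real assume c: "c > 0"
    have "kappa f R - c / R < Sup ?S" unfolding kappa_def[symmetric] using c R by simp
    then obtain r where r: "r \<in> {0<..<R}" "kappa f R - c / R < - f r / r"
      using less_cSup_iff[OF ne bdd] by auto
    then have "(kappa f R - c / R) * r < - f r"
      using pos_less_divide_eq[of r "kappa f R - c / R" "- f r"] r by simp
    then have "f r + kappa f R * r < c * r / R" by (simp add: algebra_simps)
    also have "\<dots> < c" using r c R by (simp add: divide_less_eq)
    finally show "\<exists>r\<in>{0<..<R}. f r + kappa f R * r < c" using r by blast
  qed
qed
lemma scalar_step:
  fixes f f' :: "real \<Rightarrow> real"
  assumes fd: "\<forall>t \<in> {0..<R}. (f has_real_derivative f' t) (at t within {0..<R})"
    and sm: "strict_mono_on {0..<R} f'"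
    and h1: "f 0 > 0" "f' 0 = -1"
    and h3: "\<exists>t \<in> {0<..<R}. f t < 0"
    and theta: "0 \<le> \<theta>" "\<theta> \<le> Theta f R"
    and om: "(t, e) \<in> Omega f f' R"
  shows "0 \<le> t" "t < tbar f' R" "t < R" "f' t < 0" "-1 \<le> f' t"
    "t \<le> fst (n_theta f f' \<theta> (t, e))" "fst (n_theta f f' \<theta> (t, e)) < R"
    "fst (n_theta f f' \<theta> (t, e)) = t + (1 + \<theta>) * (f t + e) / (- f' t)"
    "snd (n_theta f f' \<theta> (t, e)) = e + 2 * \<theta> * (f t + e)"
    "0 < f t + e"
    "n_theta f f' \<theta> (t, e) \<in> Omega f f' R"
proof -
  define k where "k = kappa f R"
  note kf = kappa_facts[OF fd sm h1 h3, folded k_def]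
  have om': "0 \<le> t" "t < lam f f' R" "0 \<le> e" "e \<le> k * t" "0 < f t + e"
    using om by (auto simp: Omega_def k_def)
  then show "0 \<le> t" "0 < f t + e" by auto
  obtain t0 where t0: "t0 \<in> {0<..<R}" "f t0 < 0" using h3 by auto
  have R: "R > 0" using t0 by auto
  define L where "L = {s \<in> {0..<R}. k + f' s < 0}"
  have L0: "0 \<in> L" using kf R h1 by (auto simp: L_def)
  have Lb: "bdd_above L" unfolding L_def by (rule bdd_aboveI[of _ R]) auto
  have lamL: "lam f f' R = Sup L" by (simp add: lam_def L_def k_def)
  obtain s where s: "s \<in> L" "t < s" using om'(2) less_cSup_iff[of L t] L0 Lb lamL by auto
  have sR: "s \<in> {0..<R}" "k + f' s < 0" using s by (auto simp: L_def)
  show tR: "t < R" using sR s by auto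
  have tI: "t \<in> {0..<R}" using tR om' by auto
  have fts: "f' t < f' s" using strict_mono_onD[OF sm tI sR(1) s(2)] .
  have ftk: "f' t < - k" using fts sR by linarith
  then show ft0: "f' t < 0" using kf by linarith
  define T where "T = {s \<in> {0..<R}. f' s < 0}"
  have "s \<in> T" using sR kf by (auto simp: T_def)
  moreover have "bdd_above T" unfolding T_def by (rule bdd_aboveI[of _ R]) auto
  ultimately have "s \<le> Sup T" by (rule cSup_upper)
  then show "t < tbar f' R" using s by (simp add: tbar_def T_def)
  show fm1: "-1 \<le> f' t"
  proof (cases "t = 0")
    case True then show ?thesis using h1 by simp
  next
    case False
    then have "f' 0 < f' t" using strict_mono_onD[OF sm _ tI] R om' by auto
    then show ?thesis using h1 by simp
  qed
  define u where "u = f t + e"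
  define a where "a = - f' t"
  define tp where "tp = t + (1 + \<theta>) * u / a"
  define ep where "ep = e + 2 * \<theta> * u"
  have u0: "u > 0" using om' by (simp add: u_def)
  have ak: "a > k" "a \<le> 1" using ftk fm1 by (auto simp: a_def)
  have a0: "a > 0" using ak kf by linarith
  have ntp: "n_theta f f' \<theta> (t, e) = (tp, ep)"
    by (simp add: n_theta_def tp_def ep_def u_def a_def)
  show "fst (n_theta f f' \<theta> (t, e)) = t + (1 + \<theta>) * (f t + e) / (- f' t)"
    "snd (n_theta f f' \<theta> (t, e)) = e + 2 * \<theta> * (f t + e)"
    by (simp_all add: ntp tp_def ep_def u_def a_def)
  have step0: "0 \<le> (1 + \<theta>) * u / a" using u0 a0 theta by simp
  then show "t \<le> fst (n_theta f f' \<theta> (t, e))" by (simp add: ntp tp_def)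
  have Th: "\<theta> * (2 - k) \<le> k"
  proof -
    have "2 - k > 0" using kf by linarith
    then show ?thesis using theta(2) by (simp add: Theta_def k_def[symmetric] le_divide_eq)
  qed
  have key: "(1 + \<theta>) * (a - k) < a"
  proof -
    have "\<theta> * (a - k) \<le> \<theta> * (1 - k)" using ak theta by (simp add: mult_left_mono)
    moreover have "\<theta> * (1 - k) < k"
    proof -
      have "\<theta> * (1 - k) \<le> \<theta> * (2 - k)" using theta by (simp add: mult_left_mono)
      moreover have "\<theta> * (1 - k) < \<theta> * (2 - k) \<or> \<theta> = 0" using theta by auto
      ultimately show ?thesis using Th kf by auto
    qed
    ultimately show ?thesis by (simp add: algebra_simps)
  qed
  have ak0: "a - k > 0" using ak by simp
  define T0 where "T0 = t + u / (a - k)"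
  have tpT0: "tp < T0"
  proof -
    have "(1 + \<theta>) * u * (a - k) < u * a" using key u0 by (simp add: mult.assoc mult.left_commute)
    then have "(1 + \<theta>) * u / a < u / (a - k)" using a0 ak0 by (simp add: divide_simps)
    then show ?thesis by (simp add: tp_def T0_def)
  qed
  define g where "g r = f r + k * r" for r
  have gt: "g t \<ge> u" using om' by (simp add: g_def u_def)
  have lower: "g r \<ge> g t - (a - k) * (r - t)" if "r \<in> {0..<R}" for r
  proof -
    have "f t + f' t * (r - t) \<le> f r" using tangent[OF fd sm that tI] .
    then show ?thesis by (simp add: g_def a_def algebra_simps)
  qed
  have inf: "\<exists>r\<in>{0<..<R}. g r < c" if "c > 0" for c using kf(4) that by (simp add: g_def)
  show tpR: "fst (n_theta f f' \<theta> (t, e)) < R"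
  proof (rule ccontr)
    assume "\<not> ?thesis"
    then have Rtp: "R \<le> tp" by (simp add: ntp)
    define c where "c = g t - (a - k) * (R - t)"
    have "(a - k) * (R - t) < (a - k) * (T0 - t)" using Rtp tpT0 ak0 by simp
    also have "\<dots> = u" using ak0 by (simp add: T0_def)
    finally have c0: "c > 0" using gt by (simp add: c_def)
    obtain r where r: "r \<in> {0<..<R}" "g r < c" using inf[OF c0] by auto
    have "g r \<ge> g t - (a - k) * (r - t)" using lower r by auto
    moreover have "(a - k) * (r - t) \<le> (a - k) * (R - t)" using r ak0 by simp
    ultimately show False using r by (simp add: c_def)
  qed
  then have tpR': "tp < R" by (simp add: ntp)
  have C: "k + f' s' < 0" if s': "s' \<in> {0..<R}" "t \<le> s'" "s' < T0" for s'
  proof (rule ccontr)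
    assume "\<not> ?thesis"
    then have fs: "f' s' \<ge> - k" by simp
    define c where "c = g t - (a - k) * (s' - t)"
    have "(a - k) * (s' - t) < (a - k) * (T0 - t)" using s' ak0 by simp
    also have "\<dots> = u" using ak0 by (simp add: T0_def)
    finally have c0: "c > 0" using gt by (simp add: c_def)
    obtain r where r: "r \<in> {0<..<R}" "g r < c" using inf[OF c0] by auto
    have rI: "r \<in> {0..<R}" using r by auto
    show False
    proof (cases "r \<le> s'")
      case True
      have "g r \<ge> g t - (a - k) * (r - t)" using lower rI by auto
      moreover have "(a - k) * (r - t) \<le> (a - k) * (s' - t)" using True ak0 by simp
      ultimately show False using r by (simp add: c_def)
    next
      case False
      have "f s' + f' s' * (r - s') \<le> f r" using tangent[OF fd sm rI s'(1)] .
      moreover have "f' s' * (r - s') \<ge> - k * (r - s')" using mult_right_mono[OF fs, of "r - s'"] False by simp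
      ultimately have "g r \<ge> g s'" by (simp add: g_def algebra_simps)
      moreover have "g s' \<ge> c" using lower[OF s'(1)] by (simp add: c_def)
      ultimately show False using r by simp
    qed
  qed
  have tplam: "tp < lam f f' R"
  proof -
    define s' where "s' = (tp + min T0 R) / 2"
    have s'b: "tp < s'" "s' < T0" "s' < R" using tpT0 tpR' by (auto simp: s'_def)
    have "t \<le> tp" using step0 by (simp add: tp_def)
    then have "s' \<in> L" using C[of s'] s'b om' by (auto simp: L_def)
    then have "s' \<le> Sup L" using Lb by (rule cSup_upper)
    then show ?thesis using s'b lamL by simp
  qed
  have ep1: "ep \<le> k * tp"
  proof -
    have "2 * \<theta> * a \<le> k * (1 + \<theta>)"
    proof -
      have "\<theta> * a \<le> \<theta> * 1" using mult_left_mono[OF ak(2) theta(1)] .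
      then have "2 * \<theta> * a \<le> 2 * \<theta>" by simp
      then show ?thesis using Th by (simp add: algebra_simps)
    qed
    then have "2 * \<theta> * u * a \<le> k * (1 + \<theta>) * u" using u0
      by (metis mult.assoc mult.commute mult_right_mono less_imp_le)
    then have "2 * \<theta> * u \<le> k * ((1 + \<theta>) * u / a)" using a0 by (simp add: divide_simps mult.commute mult.left_commute)
    then show ?thesis using om' by (simp add: ep_def tp_def algebra_simps)
  qed
  have ep2: "0 < f tp + ep"
  proof -
    have ne: "tp \<noteq> t" using u0 a0 theta by (simp add: tp_def)
    have "f t + f' t * (tp - t) < f tp"
      using tangent_strict[OF fd sm _ tI ne] tpR' step0 om' by (simp add: tp_def)
    moreover have "f' t * (tp - t) = - ((1 + \<theta>) * u)" using a0 by (simp add: tp_def a_def)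
    ultimately have A: "f tp > f t - (1 + \<theta>) * u" by linarith
    have B: "(1 + \<theta>) * u = u + \<theta> * u" by (simp add: algebra_simps)
    have C: "\<theta> * u \<ge> 0" using u0 theta by simp
    have D: "2 * \<theta> * u = \<theta> * u + \<theta> * u" by simp
    show ?thesis using A B C D u_def ep_def by linarith
  qed
  show "n_theta f f' \<theta> (t, e) \<in> Omega f f' R"
    using ntp tplam ep1 ep2 step0 om' u0 theta
    by (simp add: Omega_def k_def[symmetric] tp_def ep_def)
qed

lemma taylor:
  fixes F :: "'a::banach \<Rightarrow> 'b::banach"
    and F' :: "'a \<Rightarrow> ('a \<Rightarrow>\<^sub>L 'b)"
    and Finv :: "'b \<Rightarrow>\<^sub>L 'a"
    and f f' :: "real \<Rightarrow> real"
  assumes Fd: "\<forall>y \<in> ball x0 R. (F has_derivative blinfun_apply (F' y)) (at y)"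
    and majorant: "\<forall>x \<in> ball x0 R. \<forall>y \<in> ball x0 R. norm (x - x0) + norm (y - x) < R \<longrightarrow>
        norm (Finv o\<^sub>L (F' y - F' x)) \<le> f' (norm (y - x) + norm (x - x0)) - f' (norm (x - x0))"
    and fd: "\<forall>t \<in> {0..<R}. (f has_real_derivative f' t) (at t within {0..<R})"
    and cv: "convex_on {0..<R} f'"
    and xt: "norm (x - x0) \<le> t" and t0: "0 \<le> t" and tr: "t + norm d < R"
  shows "norm (Finv (F (x + d) - F x - F' x d)) \<le> f (t + norm d) - f t - f' t * norm d"
proof (cases "d = 0")
  case True then show ?thesis by (simp add: blinfun.zero_right)
next
  case False
  define r where "r = norm d"
  have r0: "r > 0" using False by (simp add: r_def)
  define s where "s = norm (x - x0)"
  have pt: "x + \<tau> *\<^sub>R d \<in> ball x0 R" "norm (x + \<tau> *\<^sub>R d - x0) \<le> s + \<tau> * r"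
    if "0 \<le> \<tau>" "\<tau> \<le> 1" for \<tau>
  proof -
    have "norm (x + \<tau> *\<^sub>R d - x0) = norm ((x - x0) + \<tau> *\<^sub>R d)" by (simp add: algebra_simps)
    also have "\<dots> \<le> norm (x - x0) + norm (\<tau> *\<^sub>R d)" by (rule norm_triangle_ineq)
    also have "\<dots> = s + \<tau> * r" using that by (simp add: s_def r_def)
    finally show "norm (x + \<tau> *\<^sub>R d - x0) \<le> s + \<tau> * r" .
    moreover have "\<tau> * r \<le> r" using that r0 by (simp add: mult_left_le_one_le)
    ultimately have "norm (x + \<tau> *\<^sub>R d - x0) < R" using xt tr by (simp add: s_def r_def)
    then show "x + \<tau> *\<^sub>R d \<in> ball x0 R" by (simp add: dist_norm norm_minus_commute)
  qed
  have xball: "x \<in> ball x0 R" using pt(1)[of 0] by simp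
  define G where "G \<tau> = Finv (F (x + \<tau> *\<^sub>R d)) - \<tau> *\<^sub>R Finv (F' x d)" for \<tau>
  define G' where "G' \<tau> = Finv (F' (x + \<tau> *\<^sub>R d) d) - Finv (F' x d)" for \<tau>
  have Gd: "(G has_vector_derivative G' \<tau>) (at \<tau>)" if "0 \<le> \<tau>" "\<tau> \<le> 1" for \<tau>
  proof -
    let ?y = "x + \<tau> *\<^sub>R d"
    have hF: "(F has_derivative blinfun_apply (F' ?y)) (at ?y)" using Fd pt[OF that] by auto
    have hl: "((\<lambda>\<tau>. x + \<tau> *\<^sub>R d) has_derivative (\<lambda>h. h *\<^sub>R d)) (at \<tau>)"
      by (auto intro!: derivative_eq_intros)
    have h1: "((\<lambda>\<tau>. F (x + \<tau> *\<^sub>R d)) has_derivative (\<lambda>h. F' ?y (h *\<^sub>R d))) (at \<tau>)"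
      using has_derivative_compose[OF hl hF] .
    have h2: "((\<lambda>\<tau>. Finv (F (x + \<tau> *\<^sub>R d))) has_derivative (\<lambda>h. Finv (F' ?y (h *\<^sub>R d)))) (at \<tau>)"
      using has_derivative_compose[OF h1 bounded_linear_imp_has_derivative[OF blinfun.bounded_linear_right]] .
    have h3: "((\<lambda>\<tau>. \<tau> *\<^sub>R Finv (F' x d)) has_derivative (\<lambda>h. h *\<^sub>R Finv (F' x d))) (at \<tau>)"
      by (auto intro!: derivative_eq_intros)
    have h4: "(G has_derivative (\<lambda>h. Finv (F' ?y (h *\<^sub>R d)) - h *\<^sub>R Finv (F' x d))) (at \<tau>)"
      unfolding G_def by (rule has_derivative_diff[OF h2 h3])
    have eq: "(\<lambda>h. Finv (F' ?y (h *\<^sub>R d)) - h *\<^sub>R Finv (F' x d)) = (\<lambda>h. h *\<^sub>R G' \<tau>)"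
      by (auto simp: G'_def blinfun.scaleR_right scaleR_diff_right)
    show ?thesis using h4 unfolding has_vector_derivative_def eq .
  qed
  have contG: "continuous_on {0..1} G"
  proof (rule continuous_at_imp_continuous_on, intro ballI)
    fix \<tau> :: real assume "\<tau> \<in> {0..1}"
    then show "isCont G \<tau>" using has_vector_derivative_continuous[OF Gd] by auto
  qed
  define \<phi> where "\<phi> \<tau> = f (t + \<tau> * r) - \<tau> * (f' t * r)" for \<tau>
  define \<phi>' where "\<phi>' \<tau> = f' (t + \<tau> * r) * r - f' t * r" for \<tau>
  have fcont: "continuous_on {0..<R} f"
    by (rule DERIV_continuous_on) (use fd in auto)
  have contphi: "continuous_on {0..1} \<phi>"
  proof -
    have "continuous_on {0..1} (\<lambda>\<tau>. t + \<tau> * r)" by (intro continuous_intros)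
    moreover have "(\<lambda>\<tau>. t + \<tau> * r) ` {0..1} \<subseteq> {0..<R}"
    proof
      fix z assume "z \<in> (\<lambda>\<tau>. t + \<tau> * r) ` {0..1}"
      then obtain \<tau> where tau: "\<tau> \<in> {0..1}" "z = t + \<tau> * r" by auto
      have "\<tau> * r \<le> r" using r0 tau by (simp add: mult_left_le_one_le)
      moreover have "0 \<le> \<tau> * r" using r0 tau by simp
      ultimately show "z \<in> {0..<R}" using t0 tr tau by (auto simp: r_def)
    qed
    ultimately have "continuous_on {0..1} (\<lambda>\<tau>. f (t + \<tau> * r))"
      using continuous_on_compose2[OF fcont] by blast
    then show ?thesis unfolding \<phi>_def by (intro continuous_intros)
  qed
  have phid: "(\<phi> has_vector_derivative \<phi>' \<tau>) (at \<tau>)" if "0 < \<tau>" "\<tau> < 1" for \<tau>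
  proof -
    have "\<tau> * r < r" "0 < \<tau> * r" using that r0 by simp_all
    moreover have "t + r < R" using tr by (simp add: r_def)
    ultimately have z: "t + \<tau> * r \<in> {0<..<R}" using t0 by simp
    have "(f has_real_derivative f' (t + \<tau> * r)) (at (t + \<tau> * r) within {0..<R})"
      using fd z by auto
    then have fz: "(f has_real_derivative f' (t + \<tau> * r)) (at (t + \<tau> * r))"
      using at_within_interior[of "t + \<tau> * r" "{0..<R}"] z by simp
    have "((\<lambda>\<tau>. t + \<tau> * r) has_real_derivative r) (at \<tau>)"
      by (auto intro!: derivative_eq_intros)
    from DERIV_chain2[OF fz this]
    have "((\<lambda>\<tau>. f (t + \<tau> * r)) has_real_derivative f' (t + \<tau> * r) * r) (at \<tau>)" .
    moreover have "((\<lambda>\<tau>. \<tau> * (f' t * r)) has_real_derivative (f' t * r)) (at \<tau>)"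
      by (auto intro!: derivative_eq_intros)
    ultimately have "(\<phi> has_real_derivative \<phi>' \<tau>) (at \<tau>)"
      unfolding \<phi>_def \<phi>'_def by (rule DERIV_diff)
    then show ?thesis by (simp add: has_real_derivative_iff_has_vector_derivative)
  qed
  have bnd: "norm (G' \<tau>) \<le> \<phi>' \<tau>" if "0 < \<tau>" "\<tau> < 1" for \<tau>
  proof -
    let ?y = "x + \<tau> *\<^sub>R d"
    have yb: "?y \<in> ball x0 R" using pt that by auto
    have nyx: "norm (?y - x) = \<tau> * r" using that by (simp add: r_def)
    have "\<tau> * r < r" using that r0 by simp
    then have sl: "s + \<tau> * r < R" "t + \<tau> * r < R" using xt tr by (auto simp: s_def r_def)
    have eqG: "G' \<tau> = (Finv o\<^sub>L (F' ?y - F' x)) d"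
      by (simp add: G'_def blinfun.diff_left blinfun.diff_right)
    have "norm (G' \<tau>) \<le> norm (Finv o\<^sub>L (F' ?y - F' x)) * r"
      unfolding eqG r_def by (rule norm_blinfun)
    also have "\<dots> \<le> (f' (\<tau> * r + s) - f' s) * r"
    proof -
      have "norm (Finv o\<^sub>L (F' ?y - F' x)) \<le> f' (norm (?y - x) + norm (x - x0)) - f' (norm (x - x0))"
      proof -
        have c1: "norm (x - x0) + norm (?y - x) < R" using sl(1) by (simp only: nyx s_def)
        show ?thesis using majorant xball yb c1 by blast
      qed
      then show ?thesis using r0 nyx by (simp add: s_def mult_right_mono)
    qed
    also have "\<dots> \<le> (f' (t + \<tau> * r) - f' t) * r"
    proof -
      have "f' (s + \<tau> * r) - f' s \<le> f' (t + \<tau> * r) - f' t"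
        using convex_incr[OF cv, of s t "\<tau> * r"] xt that r0 sl by (simp add: s_def)
      then show ?thesis using r0 by (simp add: add.commute mult_right_mono)
    qed
    also have "\<dots> = \<phi>' \<tau>" by (simp add: \<phi>'_def algebra_simps)
    finally show ?thesis .
  qed
  have "norm (G 1 - G 0) \<le> \<phi> 1 - \<phi> 0"
    using differentiable_bound_general[OF zero_less_one contG contphi _ phid bnd]
      Gd by auto
  moreover have "G 1 - G 0 = Finv (F (x + d) - F x - F' x d)"
    by (simp add: G_def blinfun.diff_right)
  moreover have "\<phi> 1 - \<phi> 0 = f (t + norm d) - f t - f' t * norm d"
    by (simp add: \<phi>_def r_def)
  ultimately show ?thesis by simp
qed

theorem proposition4p5:
  fixes F :: "'a::banach \<Rightarrow> 'b::banach"
    and F' :: "'a \<Rightarrow> ('a \<Rightarrow>\<^sub>L 'b)"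
    and Finv :: "'b \<Rightarrow>\<^sub>L 'a"
    and C :: "'a set" and x0 :: 'a
    and f f' :: "real \<Rightarrow> real" and R \<theta> :: real
    and N :: "'a \<Rightarrow> 'a"
  assumes F_cont: "continuous_on C F"
    and F_deriv: "\<forall>x \<in> interior C. (F has_derivative blinfun_apply (F' x)) (at x)"
    and F'_cont: "continuous_on (interior C) F'"
    and x0_int: "x0 \<in> interior C"
    and Finv_left: "Finv o\<^sub>L F' x0 = id_blinfun"
    and Finv_right: "F' x0 o\<^sub>L Finv = id_blinfun"
    and f_deriv: "\<forall>t \<in> {0..<R}. (f has_real_derivative f' t) (at t within {0..<R})"
    and f'_cont: "continuous_on {0..<R} f'"
    and ball_sub: "ball x0 R \<subseteq> C"
    and majorant: "\<forall>x \<in> ball x0 R. \<forall>y \<in> ball x0 R. norm (x - x0) + norm (y - x) < R \<longrightarrow>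
        norm (Finv o\<^sub>L (F' y - F' x)) \<le> f' (norm (y - x) + norm (x - x0)) - f' (norm (x - x0))"
    and init: "norm (blinfun_apply Finv (F x0)) \<le> f 0"
    and h1: "f 0 > 0" "f' 0 = -1"
    and h2: "strict_mono_on {0..<R} f'" "convex_on {0..<R} f'"
    and h3: "\<exists>t \<in> {0<..<R}. f t < 0"
    and theta: "0 \<le> \<theta>" "\<theta> \<le> Theta f R"
    and N: "N \<in> Nfamily Finv F F' x0 (tbar f' R) \<theta>"
  shows "(\<forall>p \<in> Omega f f' R.
           N ` Kset Finv F x0 f p \<subseteq> Kset Finv F x0 f (n_theta f f' \<theta> p)
         \<and> Kset Finv F x0 f (n_theta f f' \<theta> p) \<subseteq> Kall Finv F x0 f f' R
         \<and> (\<forall>x \<in> Kset Finv F x0 f p. norm (N x - x) \<le> fst (n_theta f f' \<theta> p) - fst p))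
       \<and> n_theta f f' \<theta> ` Omega f f' R \<subseteq> Omega f f' R
       \<and> N ` Kall Finv F x0 f f' R \<subseteq> Kall Finv F x0 f f' R"
proof -
  have Fd: "\<forall>y \<in> ball x0 R. (F has_derivative blinfun_apply (F' y)) (at y)"
    using F_deriv interior_maximal[OF ball_sub open_ball] by blast
  have key: "N x \<in> Kset Finv F x0 f (n_theta f f' \<theta> (t, e)) \<and> norm (N x - x) \<le> fst (n_theta f f' \<theta> (t, e)) - t"
    if om: "(t, e) \<in> Omega f f' R" and xK: "x \<in> Kset Finv F x0 f (t, e)" for t e x
  proof -
    note sc = scalar_step[OF f_deriv h2(1) h1 h3 theta om]
    define tp where "tp = fst (n_theta f f' \<theta> (t, e))"
    define ep where "ep = snd (n_theta f f' \<theta> (t, e))"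
    define u where "u = f t + e"
    define a where "a = - f' t"
    have ntp: "n_theta f f' \<theta> (t, e) = (tp, ep)" by (simp add: tp_def ep_def)
    have tp: "tp = t + (1 + \<theta>) * u / a" using sc(8) by (simp add: tp_def u_def a_def)
    have ep: "ep = e + 2 * \<theta> * u" using sc(9) by (simp add: ep_def u_def)
    have x: "norm (x - x0) \<le> t" "norm (Finv (F x)) \<le> u" using xK by (auto simp: Kset_def u_def)
    have a0: "a > 0" using sc(4) by (simp add: a_def)
    define s where "s = norm (x - x0)"
    have s: "0 \<le> s" "s \<le> t" using x by (auto simp: s_def)
    have xb: "x \<in> ball x0 R" using x sc(3) by (simp add: dist_norm norm_minus_commute)
    have xtb: "x \<in> ball x0 (tbar f' R)" using x sc(2) by (simp add: dist_norm norm_minus_commute)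
    have x0b: "x0 \<in> ball x0 R" using sc(3) sc(1) by simp
    define d where "d = N x - x"
    have Nres: "norm (Finv (F x + F' x d)) \<le> \<theta> * u"
    proof -
      have "norm (Finv (F x + F' x d)) \<le> \<theta> * norm (Finv (F x))" using N xtb by (simp add: Nfamily_def d_def)
      also have "\<dots> \<le> \<theta> * u" using x theta by (simp add: mult_left_mono)
      finally show ?thesis .
    qed
    have V1: "norm (Finv o\<^sub>L (F' x - F' x0)) \<le> f' s + 1"
    proof -
      have "norm (x0 - x0) + norm (x - x0) < R" using s sc(3) by (simp add: s_def)
      then have "norm (Finv o\<^sub>L (F' x - F' x0)) \<le> f' (norm (x - x0) + norm (x0 - x0)) - f' (norm (x0 - x0))"
        using majorant xb x0b by blast
      then show ?thesis using h1 by (simp add: s_def)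
    qed
    have fs: "f' s \<le> f' t"
    proof (cases "s = t")
      case False
      then have "s < t" using s by simp
      then show ?thesis using strict_mono_onD[OF h2(1), of s t] s sc(3) by simp
    qed simp
    have id0: "(Finv o\<^sub>L F' x0) d = d" by (simp add: Finv_left)
    have eqd: "Finv (F' x d) = d + (Finv o\<^sub>L (F' x - F' x0)) d"
      using id0 by (simp add: blinfun.diff_left blinfun.diff_right)
    have low: "a * norm d \<le> norm (Finv (F' x d))"
    proof -
      have "norm ((Finv o\<^sub>L (F' x - F' x0)) d) \<le> norm (Finv o\<^sub>L (F' x - F' x0)) * norm d"
        by (rule norm_blinfun)
      also have "\<dots> \<le> (f' s + 1) * norm d" using V1 by (simp add: mult_right_mono)
      finally have n1: "norm ((Finv o\<^sub>L (F' x - F' x0)) d) \<le> (f' s + 1) * norm d" .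
      have "d = Finv (F' x d) - (Finv o\<^sub>L (F' x - F' x0)) d" using eqd by simp
      then have "norm d \<le> norm (Finv (F' x d)) + norm ((Finv o\<^sub>L (F' x - F' x0)) d)"
        by (metis norm_triangle_ineq4)
      then have "- f' s * norm d \<le> norm (Finv (F' x d))" using n1 by (simp add: algebra_simps)
      moreover have "a * norm d \<le> - f' s * norm d" using fs by (simp add: a_def mult_right_mono)
      ultimately show ?thesis by linarith
    qed
    have up: "norm (Finv (F' x d)) \<le> (1 + \<theta>) * u"
    proof -
      have "Finv (F' x d) = Finv (F x + F' x d) - Finv (F x)" by (simp add: blinfun.add_right)
      then have "norm (Finv (F' x d)) \<le> norm (Finv (F x + F' x d)) + norm (Finv (F x))"
        by (metis norm_triangle_ineq4)
      then show ?thesis using Nres x(2) by (simp add: algebra_simps)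
    qed
    have dbound: "norm d \<le> tp - t"
    proof -
      have "a * norm d \<le> (1 + \<theta>) * u" using low up by linarith
      then have "norm d \<le> (1 + \<theta>) * u / a" using a0 by (simp add: pos_le_divide_eq mult.commute)
      then show ?thesis by (simp add: tp)
    qed
    have tpR: "tp < R" using sc(7) by (simp add: tp_def)
    have Nx0: "norm (N x - x0) \<le> tp"
    proof -
      have "N x - x0 = d + (x - x0)" by (simp add: d_def)
      then have "norm (N x - x0) \<le> norm d + norm (x - x0)" by (metis norm_triangle_ineq)
      then show ?thesis using dbound x(1) by linarith
    qed
    have tr: "t + norm d < R" using dbound tpR by linarith
    have T: "norm (Finv (F (x + d) - F x - F' x d)) \<le> f (t + norm d) - f t - f' t * norm d"
      by (rule taylor[OF Fd majorant f_deriv h2(2) x(1) sc(1) tr])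
    have mono: "f (t + norm d) - f' t * norm d \<le> f tp - f' t * (tp - t)"
    proof -
      have I1: "t + norm d \<in> {0..<R}" using tr sc(1) by simp
      have "0 \<le> tp" using sc(1) dbound norm_ge_zero[of d] by linarith
      then have I2: "tp \<in> {0..<R}" using tpR by auto
      have "f (t + norm d) + f' (t + norm d) * (tp - (t + norm d)) \<le> f tp"
        using tangent[OF f_deriv h2(1) I2 I1] .
      moreover have "f' t \<le> f' (t + norm d)"
      proof (cases "norm d = 0")
        case False
        then have "t < t + norm d" by simp
        then show ?thesis using strict_mono_onD[OF h2(1), of t "t + norm d"] sc(1) sc(3) I1 by simp
      qed simp
      then have "f' t * (tp - (t + norm d)) \<le> f' (t + norm d) * (tp - (t + norm d))"
        using dbound by (simp add: mult_right_mono)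
      ultimately show ?thesis by (simp add: algebra_simps)
    qed
    have ft: "f' t * (tp - t) = - ((1 + \<theta>) * u)" using a0 by (simp add: tp a_def)
    have FN: "norm (Finv (F (N x))) \<le> f tp + ep"
    proof -
      have "Finv (F (N x)) = Finv (F x + F' x d) + Finv (F (x + d) - F x - F' x d)"
        by (simp add: d_def blinfun.add_right blinfun.diff_right)
      then have "norm (Finv (F (N x))) \<le> norm (Finv (F x + F' x d)) + norm (Finv (F (x + d) - F x - F' x d))"
        by (metis norm_triangle_ineq)
      moreover have B: "(1 + \<theta>) * u = u + \<theta> * u" by (simp add: algebra_simps)
      moreover have D: "2 * \<theta> * u = \<theta> * u + \<theta> * u" by simp
      ultimately show ?thesis using Nres T mono ft ep u_def by linarith
    qed
    show ?thesis using Nx0 FN dbound unfolding ntp by (simp add: Kset_def d_def)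
  qed
  have nO: "n_theta f f' \<theta> p \<in> Omega f f' R" if "p \<in> Omega f f' R" for p
    using scalar_step(11)[OF f_deriv h2(1) h1 h3 theta] that by (cases p) auto
  have P1: "\<forall>p \<in> Omega f f' R.
           N ` Kset Finv F x0 f p \<subseteq> Kset Finv F x0 f (n_theta f f' \<theta> p)
         \<and> Kset Finv F x0 f (n_theta f f' \<theta> p) \<subseteq> Kall Finv F x0 f f' R
         \<and> (\<forall>x \<in> Kset Finv F x0 f p. norm (N x - x) \<le> fst (n_theta f f' \<theta> p) - fst p)"
  proof
    fix p assume p: "p \<in> Omega f f' R"
    obtain t e where pe: "p = (t, e)" by (cases p)
    have "Kset Finv F x0 f (n_theta f f' \<theta> p) \<subseteq> Kall Finv F x0 f f' R"
      unfolding Kall_def using nO[OF p] by blast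
    then show "N ` Kset Finv F x0 f p \<subseteq> Kset Finv F x0 f (n_theta f f' \<theta> p)
         \<and> Kset Finv F x0 f (n_theta f f' \<theta> p) \<subseteq> Kall Finv F x0 f f' R
         \<and> (\<forall>x \<in> Kset Finv F x0 f p. norm (N x - x) \<le> fst (n_theta f f' \<theta> p) - fst p)"
      using key[of t e] p unfolding pe by auto
  qed
  have P3: "N ` Kall Finv F x0 f f' R \<subseteq> Kall Finv F x0 f f' R"
  proof
    fix y assume "y \<in> N ` Kall Finv F x0 f f' R"
    then obtain x p where xp: "y = N x" "p \<in> Omega f f' R" "x \<in> Kset Finv F x0 f p"
      by (auto simp: Kall_def)
    then have "y \<in> Kset Finv F x0 f (n_theta f f' \<theta> p)" using P1 by blast
    then show "y \<in> Kall Finv F x0 f f' R" unfolding Kall_def using nO[OF xp(2)] by blast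
  qed
  show ?thesis using P1 P3 nO by blast
qed


end
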